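(* For all integers $b \geq k \geq 4$, $$R_{(b,k)} \leq \left(\frac{1}{\log b} + \frac{b^2}{(b^2-3b+2)\,\log \frac{b-2}{k-3}}\right)^{-1}.$$
   Context: For integers $b \geq k$ and $n$, a $(b,k)$-hash code of length $n$ is a subset $\mathcal{C} \subseteq \{1,2,\ldots,b\}^n$ such that for any $k$ distinct elements of $\mathcal{C}$ there is a coordinate $i \in \{1,\ldots,n\}$ in which their $i$-th entries are pairwise distinct. Let $N_{(b,k)}(n)$ denote the maximum size of a $(b,k)$-hash code of length $n$, and define $R_{(b,k)} = \limsup_{n\to\infty} \frac{1}{n}\log N_{(b,k)}(n)$. All logarithms are to base 2. *)

theory Defs
  imports "HOL-Analysis.Analysis"
begin

definition words :: "nat \<Rightarrow> nat \<Rightarrow> nat list set" where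
  "words b n = {xs. length xs = n \<and> set xs \<subseteq> {1..b}}"

definition is_hash_code :: "nat \<Rightarrow> nat \<Rightarrow> nat \<Rightarrow> nat list set \<Rightarrow> bool" where
  "is_hash_code b k n C \<longleftrightarrow> C \<subseteq> words b n \<and>
     (\<forall>S. S \<subseteq> C \<and> card S = k \<longrightarrow> (\<exists>i<n. inj_on (\<lambda>x. x ! i) S))"

definition N_hash :: "nat \<Rightarrow> nat \<Rightarrow> nat \<Rightarrow> nat" where
  "N_hash b k n = Max (card ` {C. is_hash_code b k n C})"

definition R_hash :: "nat \<Rightarrow> nat \<Rightarrow> ereal" where
  "R_hash b k = limsup (\<lambda>n. ereal (log 2 (real (N_hash b k n)) / real n))"

end

theory Submission
  imports Defs
begin


lemma caseA_ident:
  fixes F :: "nat \<Rightarrow> real" and b :: nat and m :: real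
  assumes b: "b \<ge> 1" and sF: "sum F {1..b} = m"
  shows "3*m*(\<Sum>a\<in>{1..b}. (F a)^2) - 2*(\<Sum>a\<in>{1..b}. (F a)^3)
     = (\<Sum>a\<in>{1..b}. (F a - m/b)^2 * (3*m - 6*m/b - 2*(F a - m/b))) + real b * (3*m^3/b^2 - 2*m^3/b^3)"
proof -
  define e where "e a = F a - m/b" for a
  have bp: "real b > 0" using b by simp
  have pt: "3*m*(F a)^2 - 2*(F a)^3 = e a^2 * (3*m - 6*m/b - 2*e a) + (3*m^3/b^2 - 2*m^3/b^3) + e a * (6*m^2/b - 6*m^2/b^2)" for a
    unfolding e_def using bp by (simp add: field_simps power2_eq_square power3_eq_cube)
  have se: "sum e {1..b} = 0" unfolding e_def using sF bp by (simp add: sum_subtractf)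
  have "3*m*(\<Sum>a\<in>{1..b}. (F a)^2) - 2*(\<Sum>a\<in>{1..b}. (F a)^3) = (\<Sum>a\<in>{1..b}. 3*m*(F a)^2 - 2*(F a)^3)"
    by (simp add: sum_subtractf sum_distrib_left)
  also have "\<dots> = (\<Sum>a\<in>{1..b}. e a^2 * (3*m - 6*m/b - 2*e a) + (3*m^3/b^2 - 2*m^3/b^3) + e a * (6*m^2/b - 6*m^2/b^2))"
    by (rule sum.cong) (use pt in auto)
  also have "\<dots> = (\<Sum>a\<in>{1..b}. e a^2 * (3*m - 6*m/b - 2*e a)) + real b * (3*m^3/b^2 - 2*m^3/b^3) + (\<Sum>a\<in>{1..b}. e a * (6*m^2/b - 6*m^2/b^2))"
    by (simp add: sum.distrib)
  also have "(\<Sum>a\<in>{1..b}. e a * (6*m^2/b - 6*m^2/b^2)) = sum e {1..b} * (6*m^2/b - 6*m^2/b^2)"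
    by (simp add: sum_distrib_right)
  finally show ?thesis using se unfolding e_def by simp
qed

lemma real_ineq:
  fixes F Q :: "nat \<Rightarrow> real" and b :: nat and m :: real
  assumes b: "b \<ge> 4" and F0: "\<And>a. a \<in> {1..b} \<Longrightarrow> 0 \<le> F a" and sF: "sum F {1..b} = m"
    and m: "m > 0" and Qlo: "\<And>a. a \<in> {1..b} \<Longrightarrow> (F a)^2 \<le> m * Q a"
    and Qhi: "\<And>a. a \<in> {1..b} \<Longrightarrow> Q a \<le> F a"
  shows "m^2 - 2*(\<Sum>a\<in>{1..b}. (F a)^2) - (\<Sum>a\<in>{1..b}. Q a * (m - 2*F a))
         \<le> ((real b)^2 - 3*real b + 2) / (real b)^2 * m^2"
proof -
  have bp: "real b \<ge> 4" using b by simp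
  have Fle: "F a \<le> m" if "a \<in> {1..b}" for a
  proof -
    have "F a \<le> sum F {1..b}" using that F0 by (intro member_le_sum) auto
    thus ?thesis using sF by simp
  qed
  show ?thesis
  proof (cases "\<forall>a\<in>{1..b}. 2 * F a \<le> m")
    case True
    have t1: "Q a * (m - 2*F a) \<ge> (F a)^2 * (m - 2*F a) / m" if "a \<in> {1..b}" for a
    proof -
      have "(F a)^2 / m \<le> Q a" using Qlo[OF that] m by (simp add: field_simps)
      thus ?thesis using True that by (metis mult_right_mono diff_ge_0_iff_ge times_divide_eq_left mult.commute divide_right_mono order_trans le_divide_eq m) 
    qed
    have "(\<Sum>a\<in>{1..b}. Q a * (m - 2*F a)) \<ge> (\<Sum>a\<in>{1..b}. (F a)^2 * (m - 2*F a) / m)"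
      by (intro sum_mono t1)
    moreover have "(\<Sum>a\<in>{1..b}. (F a)^2 * (m - 2*F a) / m) = (m * (\<Sum>a\<in>{1..b}. (F a)^2) - 2 * (\<Sum>a\<in>{1..b}. (F a)^3)) / m"
      by (simp add: sum_divide_distrib[symmetric] sum_subtractf sum_distrib_left algebra_simps power2_eq_square power3_eq_cube)
    moreover have key: "3*m*(\<Sum>a\<in>{1..b}. (F a)^2) - 2*(\<Sum>a\<in>{1..b}. (F a)^3) \<ge> real b * (3*m^3/b^2 - 2*m^3/b^3)"
    proof -
      have "(\<Sum>a\<in>{1..b}. (F a - m/b)^2 * (3*m - 6*m/b - 2*(F a - m/b))) \<ge> 0"
      proof (intro sum_nonneg mult_nonneg_nonneg)
        fix a assume a: "a \<in> {1..b}"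
        have "m * (4 / real b) \<le> m * 1" using bp m by (intro mult_left_mono) auto
        then show "0 \<le> 3*m - 6*m/b - 2*(F a - m/b)" using Fle[OF a] by (simp add: field_simps)
      qed simp
      thus ?thesis using caseA_ident[of b F m] b sF by simp
    qed
    ultimately have "m^2 - 2*(\<Sum>a\<in>{1..b}. (F a)^2) - (\<Sum>a\<in>{1..b}. Q a * (m - 2*F a))
        \<le> m^2 - 2*(\<Sum>a\<in>{1..b}. (F a)^2) - (m * (\<Sum>a\<in>{1..b}. (F a)^2) - 2 * (\<Sum>a\<in>{1..b}. (F a)^3)) / m"
      by linarith
    also have "\<dots> = (m^3 - (3*m*(\<Sum>a\<in>{1..b}. (F a)^2) - 2*(\<Sum>a\<in>{1..b}. (F a)^3))) / m"
      using m by (simp add: field_simps power2_eq_square power3_eq_cube)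
    also have "\<dots> \<le> (m^3 - real b * (3*m^3/b^2 - 2*m^3/b^3)) / m"
      using key m by (intro divide_right_mono) auto
    also have "\<dots> = ((real b)^2 - 3*real b + 2) / (real b)^2 * m^2"
      using m bp by (simp add: field_simps power2_eq_square power3_eq_cube)
    finally show ?thesis .
  next
    case False
    then obtain a0 where a0: "a0 \<in> {1..b}" "2 * F a0 > m" by auto
    define t where "t = F a0"
    define Ot where "Ot = {1..b} - {a0}"
    have finOt: "finite Ot" and cardOt: "card Ot = b - 1" using a0 unfolding Ot_def by auto
    have split: "sum h {1..b} = h a0 + sum h Ot" for h :: "nat \<Rightarrow> real"
      unfolding Ot_def using a0 by (simp add: sum.remove)
    define s where "s = sum F Ot"
    have st: "s = m - t" using split[of F] sF unfolding s_def t_def by simp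
    have Oh: "2 * F a \<le> m" if "a \<in> Ot" for a
    proof -
      have "F a + F a0 \<le> m" using split[of F] sF that F0 unfolding Ot_def
        by (smt (verit, ccfv_SIG) DiffE finOt member_le_sum Ot_def)
      thus ?thesis using a0 by simp
    qed
    have t1: "Q a * (m - 2*F a) \<ge> 0" if "a \<in> Ot" for a
    proof -
      have aa: "a \<in> {1..b}" using that unfolding Ot_def by auto
      have "0 \<le> (F a)^2 / m" using m by simp
      also have "(F a)^2 / m \<le> Q a" using Qlo[OF aa] m by (simp add: field_simps)
      finally show ?thesis using Oh[OF that] by simp
    qed
    have t0: "Q a0 * (m - 2*t) \<ge> t * (m - 2*t)"
      using Qhi[OF a0(1)] a0(2) unfolding t_def by (intro mult_right_mono_neg) auto
    have cs: "s^2 \<le> (\<Sum>a\<in>Ot. (F a)^2) * (real b - 1)"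
      using sum_squared_le_sum_of_squares[of F Ot] cardOt b unfolding s_def by (simp add: of_nat_diff)
    have s0: "0 \<le> s" unfolding s_def Ot_def using F0 by (intro sum_nonneg) auto
    have s2: "2 * s \<le> m" using st a0 unfolding t_def by simp
    have "m^2 - 2*(\<Sum>a\<in>{1..b}. (F a)^2) - (\<Sum>a\<in>{1..b}. Q a * (m - 2*F a))
        = m^2 - 2*t^2 - 2*(\<Sum>a\<in>Ot. (F a)^2) - Q a0 * (m - 2*t) - (\<Sum>a\<in>Ot. Q a * (m - 2*F a))"
      using split[of "\<lambda>a. (F a)^2"] split[of "\<lambda>a. Q a * (m - 2*F a)"] unfolding t_def by simp
    also have "\<dots> \<le> m^2 - 2*t^2 - 2*(\<Sum>a\<in>Ot. (F a)^2) - t * (m - 2*t)"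
      using t0 sum_nonneg[of Ot "\<lambda>a. Q a * (m - 2*F a)"] t1 by force
    also have "\<dots> = m * s - 2*(\<Sum>a\<in>Ot. (F a)^2)" using st by (simp add: algebra_simps power2_eq_square) (metis distrib_left)
    also have "\<dots> \<le> m * s - 2 * s^2 / (real b - 1)"
      using cs bp by (simp add: field_simps)
    also have "\<dots> \<le> ((real b)^2 - 3*real b + 2) / (real b)^2 * m^2"
    proof -
      have nz: "real b - 1 \<noteq> 0" using bp by simp
      have d1: "m * s - 2 * s^2 / (real b - 1) = (m^2/2 - m^2/(2*(real b - 1))) - (m/2 - s) * (m - 2*(s + m/2)/(real b - 1))"
        using nz by (simp add: divide_simps power2_eq_square) (simp add: algebra_simps)
      have "2*(s + m/2)/(real b - 1) \<le> 2*m/(real b - 1)" using s2 bp by (intro divide_right_mono) auto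
      also have "2*m/(real b - 1) \<le> m" using bp m by (simp add: field_simps)
      finally have "0 \<le> (m/2 - s) * (m - 2*(s + m/2)/(real b - 1))" using s2 by simp
      moreover have "m^2/2 - m^2/(2*(real b - 1)) \<le> ((real b)^2 - 3*real b + 2) / (real b)^2 * m^2"
      proof -
        have "1/2 - 1/(2*(real b - 1)) \<le> ((real b)^2 - 3*real b + 2) / (real b)^2"
        proof -
          have q: "0 \<le> real b * (real b - 4) + 2" using bp by simp
          have "0 \<le> (real b - 2) * (real b * (real b - 4) + 2)" using bp q by simp
          thus ?thesis using bp by (simp add: field_simps power2_eq_square)
        qed
        from mult_right_mono[OF this, of "m^2"] show ?thesis by (simp add: field_simps)
      qed
      ultimately show ?thesis using d1 by linarith
    qed
    finally show ?thesis .
  qed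
qed



lemma Q_lower:
  fixes Cs :: "'a set" and key :: "'a \<Rightarrow> 'k" and col :: "'a \<Rightarrow> nat" and a :: nat
  assumes fin: "finite Cs"
  defines "A \<equiv> {x\<in>Cs. col x = a}"
  shows "(real (card A))^2 \<le> real (card Cs) *
     (\<Sum>x\<in>A. real (card {y\<in>{y\<in>Cs. key y = key x}. col y = col x}) / real (card {y\<in>Cs. key y = key x}))"
proof -
  define d where "d x = real (card {y\<in>Cs. key y = key x})" for x
  define nn where "nn x = real (card {y\<in>{y\<in>Cs. key y = key x}. col y = col x})" for x
  have finA: "finite A" using fin unfolding A_def by simp
  have dpos: "d x > 0" if "x \<in> Cs" for x
    unfolding d_def using that fin by (auto simp: card_gt_0_iff)
  have npos: "nn x > 0" if "x \<in> Cs" for x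
    unfolding nn_def using that fin by (auto simp: card_gt_0_iff)
  have AC: "A \<subseteq> Cs" unfolding A_def by auto
  have hsum: "(\<Sum>x\<in>A. d x / nn x) \<le> real (card Cs)"
  proof -
    have "(\<Sum>x\<in>A. d x / nn x) = (\<Sum>x\<in>A. \<Sum>y\<in>{y\<in>Cs. key x = key y}. 1 / nn x)"
      unfolding d_def by (intro sum.cong) (auto simp: eq_commute)
    also have "\<dots> = (\<Sum>y\<in>Cs. \<Sum>x\<in>{x\<in>A. key x = key y}. 1 / nn x)"
      by (rule sum.swap_restrict[OF finA fin])
    also have "\<dots> \<le> (\<Sum>y\<in>Cs. 1)"
    proof (intro sum_mono)
      fix y assume y: "y \<in> Cs"
      define E where "E = {x\<in>A. key x = key y}"
      have "nn x = real (card E)" if "x \<in> E" for x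
      proof -
        have "{y\<in>{y\<in>Cs. key y = key x}. col y = col x} = E"
          using that unfolding E_def A_def by auto
        thus ?thesis unfolding nn_def by simp
      qed
      hence "(\<Sum>x\<in>E. 1 / nn x) = (\<Sum>x\<in>E. 1 / real (card E))" by simp
      also have "\<dots> \<le> 1" by (cases "card E = 0") auto
      finally show "(\<Sum>x\<in>{x\<in>A. key x = key y}. 1 / nn x) \<le> 1" unfolding E_def .
    qed
    finally show ?thesis by simp
  qed
  have "(real (card A))^2 = (\<Sum>x\<in>A. sqrt (nn x / d x) * sqrt (d x / nn x))^2"
  proof -
    have "sqrt (nn x / d x) * sqrt (d x / nn x) = 1" if "x \<in> A" for x
    proof -
      have "x \<in> Cs" using that AC by auto
      hence "d x > 0" "nn x > 0" using dpos npos by auto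
      thus ?thesis by (simp add: real_sqrt_mult[symmetric])
    qed
    thus ?thesis by simp
  qed
  also have "\<dots> \<le> (\<Sum>x\<in>A. (sqrt (nn x / d x))^2) * (\<Sum>x\<in>A. (sqrt (d x / nn x))^2)"
    by (rule Cauchy_Schwarz_ineq_sum)
  also have "\<dots> = (\<Sum>x\<in>A. nn x / d x) * (\<Sum>x\<in>A. d x / nn x)"
    using AC dpos npos by (intro arg_cong2[where f="(*)"] sum.cong) (auto simp: less_imp_le)
  also have "\<dots> \<le> (\<Sum>x\<in>A. nn x / d x) * real (card Cs)"
    using AC dpos npos hsum by (intro mult_left_mono sum_nonneg) (auto simp: less_imp_le)
  finally show ?thesis unfolding nn_def d_def by (simp add: mult.commute)
qed


lemma coord_bound:
  fixes Cs :: "'a set" and key :: "'a \<Rightarrow> 'k" and col :: "'a \<Rightarrow> nat" and b :: nat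
  assumes fin: "finite Cs" and colr: "\<And>x. x \<in> Cs \<Longrightarrow> col x \<in> {1..b}" and b: "b \<ge> 4"
  shows "(\<Sum>x\<in>Cs. (\<Sum>y\<in>{y\<in>Cs. key y = key x}. (if col x \<noteq> col y then real (card {u\<in>Cs. col u \<noteq> col x \<and> col u \<noteq> col y}) else 0)) / real (card {y\<in>Cs. key y = key x}))
     \<le> ((real b)^2 - 3*real b + 2)/(real b)^2 * (real (card Cs))^2"
proof (cases "Cs = {}")
  case True then show ?thesis by simp
next
  case ne: False
  define D where "D x = {y\<in>Cs. key y = key x}" for x
  define d where "d x = real (card (D x))" for x
  define m where "m = real (card Cs)"
  define F where "F a = real (card {u\<in>Cs. col u = a})" for a
  define nn where "nn x = real (card {y\<in>D x. col y = col x})" for x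
  define Q where "Q a = (\<Sum>x\<in>{x\<in>Cs. col x = a}. nn x / d x)" for a
  have mpos: "m > 0" unfolding m_def using fin ne by (simp add: card_gt_0_iff)
  have finD: "finite (D x)" for x unfolding D_def using fin by simp
  have dpos: "d x > 0" if "x \<in> Cs" for x
    unfolding d_def D_def using that fin by (auto simp: card_gt_0_iff)
  have Dsym: "D y = D x" if "y \<in> D x" for x y using that unfolding D_def by auto
  have cardsplit: "real (card {u\<in>Cs. col u \<noteq> p \<and> col u \<noteq> q}) = m - F p - F q" if "p \<noteq> q" for p q
  proof -
    have "Cs = {u\<in>Cs. col u \<noteq> p \<and> col u \<noteq> q} \<union> ({u\<in>Cs. col u = p} \<union> {u\<in>Cs. col u = q})" by auto
    hence "card Cs = card {u\<in>Cs. col u \<noteq> p \<and> col u \<noteq> q} + (card {u\<in>Cs. col u = p} + card {u\<in>Cs. col u = q})"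
    proof -
      have "card ({u\<in>Cs. col u \<noteq> p \<and> col u \<noteq> q} \<union> ({u\<in>Cs. col u = p} \<union> {u\<in>Cs. col u = q}))
          = card {u\<in>Cs. col u \<noteq> p \<and> col u \<noteq> q} + card ({u\<in>Cs. col u = p} \<union> {u\<in>Cs. col u = q})"
        using fin by (intro card_Un_disjoint) auto
      moreover have "card ({u\<in>Cs. col u = p} \<union> {u\<in>Cs. col u = q}) = card {u\<in>Cs. col u = p} + card {u\<in>Cs. col u = q}"
        using fin that by (intro card_Un_disjoint) auto
      ultimately show ?thesis using \<open>Cs = _\<close> by simp
    qed
    thus ?thesis unfolding m_def F_def by simp
  qed
  have trm: "(if col x \<noteq> col y then real (card {u\<in>Cs. col u \<noteq> col x \<and> col u \<noteq> col y}) else 0)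
      = (m - F (col x) - F (col y)) - (if col y = col x then m - 2 * F (col x) else 0)" for x y
    using cardsplit[of "col x" "col y"] by auto
  have inner: "(\<Sum>y\<in>D x. (m - F (col x) - F (col y)) - (if col y = col x then m - 2 * F (col x) else 0)) / d x
     = m - F (col x) - (\<Sum>y\<in>D x. F (col y)) / d x - nn x * (m - 2 * F (col x)) / d x" if "x \<in> Cs" for x
  proof -
    have "(\<Sum>y\<in>D x. (if col y = col x then m - 2 * F (col x) else 0)) = nn x * (m - 2 * F (col x))"
      unfolding nn_def using sum.inter_filter[OF finD[of x], of "\<lambda>y. m - 2 * F (col x)" "\<lambda>y. col y = col x", symmetric] by simp
    hence "(\<Sum>y\<in>D x. (m - F (col x) - F (col y)) - (if col y = col x then m - 2 * F (col x) else 0))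
        = d x * (m - F (col x)) - (\<Sum>y\<in>D x. F (col y)) - nn x * (m - 2 * F (col x))"
      unfolding d_def by (simp only: sum_subtractf sum_constant) (simp add: algebra_simps)
    moreover have "\<And>dd mm aa SS nn' cc :: real. dd > 0 \<Longrightarrow> (dd * (mm - aa) - SS - nn' * cc) / dd = mm - aa - SS / dd - nn' * cc / dd"
      by (simp add: field_simps)
    ultimately show ?thesis using dpos[OF that] by simp
  qed
  have LHS: "(\<Sum>x\<in>Cs. (\<Sum>y\<in>{y\<in>Cs. key y = key x}. (if col x \<noteq> col y then real (card {u\<in>Cs. col u \<noteq> col x \<and> col u \<noteq> col y}) else 0)) / real (card {y\<in>Cs. key y = key x}))
      = (\<Sum>x\<in>Cs. m - F (col x) - (\<Sum>y\<in>D x. F (col y)) / d x - nn x * (m - 2 * F (col x)) / d x)"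
    using inner unfolding trm D_def[symmetric] d_def[symmetric] by (intro sum.cong) auto
  have swap: "(\<Sum>x\<in>Cs. (\<Sum>y\<in>D x. F (col y)) / d x) = (\<Sum>x\<in>Cs. F (col x))"
  proof -
    have "(\<Sum>x\<in>Cs. (\<Sum>y\<in>D x. F (col y)) / d x) = (\<Sum>x\<in>Cs. \<Sum>y\<in>{y\<in>Cs. key x = key y}. F (col y) / d y)"
      unfolding D_def by (intro sum.cong) (auto simp: sum_divide_distrib d_def D_def eq_commute)
    also have "\<dots> = (\<Sum>y\<in>Cs. \<Sum>x\<in>{x\<in>Cs. key x = key y}. F (col y) / d y)"
      by (rule sum.swap_restrict[OF fin fin])
    also have "\<dots> = (\<Sum>y\<in>Cs. F (col y))"
    proof (intro sum.cong refl)
      fix y assume "y \<in> Cs"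
      have "(\<Sum>x\<in>{x\<in>Cs. key x = key y}. F (col y) / d y) = d y * (F (col y) / d y)"
        unfolding d_def D_def by simp
      thus "(\<Sum>x\<in>{x\<in>Cs. key x = key y}. F (col y) / d y) = F (col y)" using dpos[OF \<open>y \<in> Cs\<close>] by simp
    qed
    finally show ?thesis .
  qed
  have grp: "(\<Sum>x\<in>Cs. h x) = (\<Sum>a\<in>{1..b}. \<Sum>x\<in>{x\<in>Cs. col x = a}. h x)" for h :: "'a \<Rightarrow> real"
  proof -
    have "col ` Cs \<subseteq> {1..b}" using colr by auto
    from sum.group[OF fin _ this, of h] show ?thesis by simp
  qed
  have SF: "(\<Sum>x\<in>Cs. F (col x)) = (\<Sum>a\<in>{1..b}. (F a)^2)"
    unfolding grp[of "\<lambda>x. F (col x)"] by (intro sum.cong refl) (simp add: F_def power2_eq_square)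
  have SQ: "(\<Sum>x\<in>Cs. nn x * (m - 2 * F (col x)) / d x) = (\<Sum>a\<in>{1..b}. Q a * (m - 2 * F a))"
    unfolding grp[of "\<lambda>x. nn x * (m - 2 * F (col x)) / d x"] Q_def
    by (intro sum.cong refl) (simp add: sum_distrib_right)
  have sumF: "sum F {1..b} = m"
    using grp[of "\<lambda>x. 1"] unfolding F_def m_def by simp
  have "(\<Sum>x\<in>Cs. m - F (col x) - (\<Sum>y\<in>D x. F (col y)) / d x - nn x * (m - 2 * F (col x)) / d x)
      = m * m - 2 * (\<Sum>a\<in>{1..b}. (F a)^2) - (\<Sum>a\<in>{1..b}. Q a * (m - 2 * F a))"
    using swap SF SQ unfolding m_def by (simp add: sum_subtractf)
  also have "\<dots> \<le> ((real b)^2 - 3*real b + 2)/(real b)^2 * m^2"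
  proof -
    have "m^2 - 2 * (\<Sum>a\<in>{1..b}. (F a)^2) - (\<Sum>a\<in>{1..b}. Q a * (m - 2 * F a)) \<le> ((real b)^2 - 3*real b + 2)/(real b)^2 * m^2"
    proof (rule real_ineq[OF b _ sumF mpos])
      fix a assume a: "a \<in> {1..b}"
      show "0 \<le> F a" unfolding F_def by simp
      show "(F a)^2 \<le> m * Q a"
        using Q_lower[OF fin, of col a key] unfolding F_def m_def Q_def nn_def d_def D_def by simp
      show "Q a \<le> F a"
      proof -
        have "Q a \<le> (\<Sum>x\<in>{x\<in>Cs. col x = a}. 1)" unfolding Q_def
        proof (intro sum_mono)
          fix x assume x: "x \<in> {x\<in>Cs. col x = a}"
          have "nn x \<le> d x" unfolding nn_def d_def using finD[of x] by (intro of_nat_mono card_mono) auto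
          thus "nn x / d x \<le> 1" using dpos[of x] x by simp
        qed
        thus ?thesis unfolding F_def by simp
      qed
    qed
    thus ?thesis by (simp add: power2_eq_square)
  qed
  finally show ?thesis using LHS unfolding m_def by simp
qed



lemma card_subsets_containing:
  assumes fin: "finite A" and c: "c \<in> A" and t: "t \<ge> 1"
  shows "card {s. s \<subseteq> A \<and> card s = t \<and> c \<in> s} = (card A - 1) choose (t - 1)"
proof -
  have eq: "{s. s \<subseteq> A \<and> card s = t \<and> c \<in> s} = insert c ` {s. s \<subseteq> A - {c} \<and> card s = t - 1}"
  proof (intro equalityI subsetI)
    fix s assume s: "s \<in> {s. s \<subseteq> A \<and> card s = t \<and> c \<in> s}"
    hence fs: "finite s" using fin finite_subset by auto
    have "s = insert c (s - {c})" using s by auto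
    moreover have "s - {c} \<in> {s. s \<subseteq> A - {c} \<and> card s = t - 1}" using s fs by auto
    ultimately show "s \<in> insert c ` {s. s \<subseteq> A - {c} \<and> card s = t - 1}" by blast
  next
    fix s assume "s \<in> insert c ` {s. s \<subseteq> A - {c} \<and> card s = t - 1}"
    then obtain s0 where s0: "s0 \<subseteq> A - {c}" "card s0 = t - 1" "s = insert c s0" by auto
    have "finite s0" using s0 fin finite_subset by auto
    moreover have "c \<notin> s0" using s0 by auto
    ultimately have "card s = t" using s0 t by (simp add: card_insert_disjoint)
    thus "s \<in> {s. s \<subseteq> A \<and> card s = t \<and> c \<in> s}" using s0 c by auto
  qed
  have inj: "inj_on (insert c) {s. s \<subseteq> A - {c} \<and> card s = t - 1}"
    by (intro inj_onI) (metis Diff_insert_absorb insert_subset subset_Diff_insert mem_Collect_eq)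
  have "card {s. s \<subseteq> A \<and> card s = t \<and> c \<in> s} = card {s. s \<subseteq> A - {c} \<and> card s = t - 1}"
    unfolding eq by (rule card_image[OF inj])
  also have "\<dots> = card (A - {c}) choose (t - 1)" using fin by (intro n_subsets) auto
  finally show ?thesis using c fin by simp
qed

lemma hansel_count:
  fixes V Z :: "'a set" and I :: "nat set" and val :: "'a \<Rightarrow> nat \<Rightarrow> nat" and Col :: "nat \<Rightarrow> nat set"
    and t Bc :: nat
  assumes finV: "finite V" and finZ: "finite Z" and finI: "finite I"
    and Col: "\<And>i. i \<in> I \<Longrightarrow> finite (Col i) \<and> card (Col i) = Bc"
    and t: "1 \<le> t" "t \<le> Bc"
    and sep: "\<And>T. T \<subseteq> V - Z \<Longrightarrow> card T = t + 1 \<Longrightarrow> \<exists>i\<in>I. (\<forall>u\<in>T. val u i \<in> Col i) \<and> inj_on (\<lambda>u. val u i) T"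
  shows "(\<Sum>u\<in>V. (real t / real Bc) ^ card {i\<in>I. val u i \<in> Col i}) \<le> real t + real (card Z)"
proof -
  define Om where "Om i = {s. s \<subseteq> Col i \<and> card s = t}" for i
  define Omega where "Omega = PiE I Om"
  define W where "W S = {u\<in>V. \<forall>i\<in>I. val u i \<in> Col i \<longrightarrow> val u i \<in> S i}" for S
  define C where "C = Bc choose t"
  have Cpos: "C > 0" unfolding C_def using t by simp
  have cardOm: "card (Om i) = C" if "i \<in> I" for i
    unfolding Om_def C_def using Col[OF that] by (simp add: n_subsets)
  have finOm: "finite (Om i)" if "i \<in> I" for i
    unfolding Om_def using Col[OF that] by simp
  have finOmega: "finite Omega" unfolding Omega_def using finI finOm by (intro finite_PiE) auto
  have cardOmega: "card Omega = C ^ card I"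
    unfolding Omega_def using finI cardOm by (simp add: card_PiE)
  have Wbound: "card (W S) \<le> t + card Z" if S: "S \<in> Omega" for S
  proof -
    have "card (W S - Z) \<le> t"
    proof (rule ccontr)
      assume "\<not> card (W S - Z) \<le> t"
      hence "t + 1 \<le> card (W S - Z)" by simp
      then obtain T where T: "T \<subseteq> W S - Z" "card T = t + 1"
        by (meson obtain_subset_with_card_n)
      have "T \<subseteq> V - Z" using T unfolding W_def by auto
      then obtain i where i: "i \<in> I" "\<forall>u\<in>T. val u i \<in> Col i" "inj_on (\<lambda>u. val u i) T"
        using sep T(2) by blast
      have "(\<lambda>u. val u i) ` T \<subseteq> S i" using T i unfolding W_def by auto
      moreover have "S i \<in> Om i" using S i(1) unfolding Omega_def by auto
      hence "finite (S i)" "card (S i) = t" unfolding Om_def using Col[OF i(1)] finite_subset by auto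
      ultimately have "card ((\<lambda>u. val u i) ` T) \<le> t" by (metis card_mono)
      moreover have "card ((\<lambda>u. val u i) ` T) = t + 1" using card_image[OF i(3)] T(2) by simp
      ultimately show False by simp
    qed
    moreover have "card (W S) \<le> card (W S - Z) + card Z"
    proof -
      have "finite (W S)" unfolding W_def using finV by simp
      have "card (W S) \<le> card ((W S - Z) \<union> Z)" using finZ \<open>finite (W S)\<close> by (intro card_mono) auto
      also have "\<dots> \<le> card (W S - Z) + card Z" by (rule card_Un_le)
      finally show ?thesis .
    qed
    ultimately show ?thesis by simp
  qed
  define r where "r = real t / real Bc"
  define e where "e u = card {i\<in>I. val u i \<in> Col i}" for u
  have C1: "real (Bc - 1 choose (t - 1)) = real C * r"
  proof -
    have "Suc (Bc - 1) * (Bc - 1 choose (t - 1)) = (Suc (Bc - 1) choose Suc (t - 1)) * Suc (t - 1)"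
      by (rule Suc_times_binomial_eq)
    hence "Bc * (Bc - 1 choose (t - 1)) = C * t" unfolding C_def using t by simp
    hence "real Bc * real (Bc - 1 choose (t - 1)) = real C * real t" by (metis of_nat_mult)
    thus ?thesis unfolding r_def using t by (simp add: field_simps)
  qed
  have cu: "real (card {S\<in>Omega. u \<in> W S}) = real C ^ card I * r ^ e u" if u: "u \<in> V" for u
  proof -
    have "{S\<in>Omega. u \<in> W S} = PiE I (\<lambda>i. if val u i \<in> Col i then {s\<in>Om i. val u i \<in> s} else Om i)"
      unfolding Omega_def W_def using u by (intro set_eqI) (simp add: PiE_iff, metis (mono_tags, lifting) mem_Collect_eq)
    hence "card {S\<in>Omega. u \<in> W S} = (\<Prod>i\<in>I. card (if val u i \<in> Col i then {s\<in>Om i. val u i \<in> s} else Om i))"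
      using finI by (simp add: card_PiE)
    also have "\<dots> = (\<Prod>i\<in>I. if val u i \<in> Col i then (Bc - 1 choose (t - 1)) else C)"
    proof (intro prod.cong refl)
      fix i assume i: "i \<in> I"
      show "card (if val u i \<in> Col i then {s\<in>Om i. val u i \<in> s} else Om i) = (if val u i \<in> Col i then (Bc - 1 choose (t - 1)) else C)"
      proof (cases "val u i \<in> Col i")
        case True
        have "{s\<in>Om i. val u i \<in> s} = {s. s \<subseteq> Col i \<and> card s = t \<and> val u i \<in> s}" unfolding Om_def by auto
        thus ?thesis using True card_subsets_containing[of "Col i" "val u i" t] Col[OF i] t by simp
      qed (use cardOm[OF i] in simp)
    qed
    finally have "real (card {S\<in>Omega. u \<in> W S}) = (\<Prod>i\<in>I. real (if val u i \<in> Col i then (Bc - 1 choose (t - 1)) else C))"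
      by (simp only: of_nat_prod)
    also have "\<dots> = (\<Prod>i\<in>I. if val u i \<in> Col i then real C * r else real C * 1)"
    proof (intro prod.cong refl)
      fix i show "real (if val u i \<in> Col i then (Bc - 1 choose (t - 1)) else C) = (if val u i \<in> Col i then real C * r else real C * 1)"
        using C1 by (cases "val u i \<in> Col i") simp_all
    qed
    also have "\<dots> = (\<Prod>i\<in>I. real C * (if val u i \<in> Col i then r else 1))"
      by (intro prod.cong) auto
    also have "\<dots> = real C ^ card I * (\<Prod>i\<in>I. (if val u i \<in> Col i then r else 1))"
      by (simp add: prod.distrib)
    also have "(\<Prod>i\<in>I. (if val u i \<in> Col i then r else 1)) = r ^ e u"
      unfolding e_def using finI by (simp add: prod.If_cases Int_def)
    finally show ?thesis .
  qed
  have swap: "(\<Sum>S\<in>Omega. card (W S)) = (\<Sum>u\<in>V. card {S\<in>Omega. u \<in> W S})"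
  proof -
    have "(\<Sum>S\<in>Omega. card (W S)) = (\<Sum>S\<in>Omega. \<Sum>u\<in>V. if u \<in> W S then 1 else 0)"
    proof (intro sum.cong refl)
      fix S
      have "W S \<subseteq> V" unfolding W_def by auto
      hence "W S = {u\<in>V. u \<in> W S}" by auto
      thus "card (W S) = (\<Sum>u\<in>V. if u \<in> W S then 1 else 0)"
        using sum.inter_filter[OF finV, of "\<lambda>_. 1::nat" "\<lambda>u. u \<in> W S"] by simp
    qed
    also have "\<dots> = (\<Sum>u\<in>V. \<Sum>S\<in>Omega. if u \<in> W S then 1 else 0)" by (rule sum.swap)
    also have "\<dots> = (\<Sum>u\<in>V. card {S\<in>Omega. u \<in> W S})"
      using sum.inter_filter[OF finOmega, of "\<lambda>_. 1::nat"] by simp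
    finally show ?thesis .
  qed
  have "(\<Sum>S\<in>Omega. card (W S)) \<le> card Omega * (t + card Z)"
    using sum_bounded_above[of Omega "\<lambda>S. card (W S)" "t + card Z"] Wbound by simp
  hence "real (\<Sum>u\<in>V. card {S\<in>Omega. u \<in> W S}) \<le> real (card Omega * (t + card Z))"
    unfolding swap by (simp only: of_nat_le_iff)
  hence "(\<Sum>u\<in>V. real C ^ card I * r ^ e u) \<le> real C ^ card I * (real t + real (card Z))"
    using cu cardOmega by (simp add: of_nat_sum[symmetric])
  hence "real C ^ card I * (\<Sum>u\<in>V. r ^ e u) \<le> real C ^ card I * (real t + real (card Z))"
    by (simp add: sum_distrib_left)
  hence "(\<Sum>u\<in>V. r ^ e u) \<le> real t + real (card Z)"
    using Cpos by (simp add: mult_le_cancel_left_pos)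
  thus ?thesis unfolding r_def e_def .
qed


lemma jensen_log:
  fixes V :: "'a set" and e :: "'a \<Rightarrow> nat" and r K :: real
  assumes finV: "finite V" and ne: "V \<noteq> {}" and r: "r > 0" and K: "(\<Sum>u\<in>V. r ^ e u) \<le> K"
  shows "ln (real (card V)) \<le> ln K - (\<Sum>u\<in>V. real (e u)) / real (card V) * ln r"
proof -
  define n where "n = real (card V)"
  have npos: "n > 0" unfolding n_def using finV ne by (simp add: card_gt_0_iff)
  have "exp (\<Sum>u\<in>V. (1/n) *\<^sub>R (real (e u) * ln r)) \<le> (\<Sum>u\<in>V. (1/n) * exp (real (e u) * ln r))"
    using npos by (intro convex_on_sum[OF finV ne exp_convex]) (auto simp: n_def)
  also have "\<dots> = (1/n) * (\<Sum>u\<in>V. r ^ e u)"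
  proof -
    have "exp (real (e u) * ln r) = r ^ e u" for u using r by (simp add: ln_realpow[symmetric])
    thus ?thesis by (simp add: sum_distrib_left)
  qed
  also have "\<dots> \<le> K / n" using K npos by (simp add: divide_right_mono)
  finally have ex: "exp ((\<Sum>u\<in>V. real (e u)) / n * ln r) \<le> K / n"
    by (simp add: sum_distrib_left sum_divide_distrib[symmetric] mult.commute)
  have Kpos: "K / n > 0" using ex by (metis exp_gt_zero order_less_le_trans)
  hence "(\<Sum>u\<in>V. real (e u)) / n * ln r \<le> ln (K / n)"
    using ex by (metis exp_le_cancel_iff exp_ln)
  also have "ln (K / n) = ln K - ln n" using Kpos npos by (simp add: ln_div zero_less_divide_iff)
  finally show ?thesis unfolding n_def by simp
qed

lemma words_nth: assumes "u \<in> words b n" "i < n" shows "u ! i \<in> {1..b}"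
proof -
  have "length u = n" "set u \<subseteq> {1..b}" using assms(1) unfolding words_def by auto
  moreover have "u ! i \<in> set u" using nth_mem[of i u] assms(2) \<open>length u = n\<close> by simp
  ultimately show ?thesis by blast
qed

lemma hash_sep:
  assumes hc: "is_hash_code b k n C" and k: "4 \<le> k" and Cs: "Cs \<subseteq> C"
    and x: "x \<in> Cs" and y: "y \<in> Cs" and xy: "x \<noteq> y"
    and T: "T \<subseteq> Cs - {x, y}" and cT: "card T = (k - 3) + 1"
  shows "\<exists>i\<in>{i. i < n \<and> x ! i \<noteq> y ! i}. (\<forall>u\<in>T. u ! i \<in> {1..b} - {x ! i, y ! i}) \<and> inj_on (\<lambda>u. u ! i) T"
proof -
  have CW: "C \<subseteq> words b n" using hc unfolding is_hash_code_def by auto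
  have finT: "finite T" using cT k by (metis card.infinite add_eq_0_iff_both_eq_0 one_neq_zero)
  have "card (insert x (insert y T)) = k"
    using T cT finT xy k by (auto simp: card_insert_if)
  moreover have "insert x (insert y T) \<subseteq> C" using T x y Cs by auto
  ultimately obtain i where i: "i < n" "inj_on (\<lambda>u. u ! i) (insert x (insert y T))"
    using hc unfolding is_hash_code_def by blast
  have "x ! i \<noteq> y ! i" using i(2) xy by (auto dest: inj_onD)
  moreover have "\<forall>u\<in>T. u ! i \<in> {1..b} - {x ! i, y ! i}"
  proof
    fix u assume u: "u \<in> T"
    have "u ! i \<in> {1..b}" using words_nth[of u b n i] u T Cs CW i(1) by auto
    moreover have "u \<noteq> x" "u \<noteq> y" using u T by auto
    hence "u ! i \<noteq> x ! i" "u ! i \<noteq> y ! i" using inj_onD[OF i(2), of u x] inj_onD[OF i(2), of u y] u by auto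
    ultimately show "u ! i \<in> {1..b} - {x ! i, y ! i}" by auto
  qed
  moreover have "inj_on (\<lambda>u. u ! i) T" using i(2) by (rule inj_on_subset) auto
  ultimately show ?thesis using i(1) by auto
qed



lemma avg_bound:
  fixes b k n L l :: nat and C Cs :: "nat list set"
  assumes CW: "Cs \<subseteq> words b n" and finCs: "finite Cs" and b: "4 \<le> b" and that: "l \<le> n"
  shows "(\<Sum>x\<in>Cs. (\<Sum>y\<in>{y\<in>Cs. take l y = take l x}.
            (\<Sum>i<n. if x ! i \<noteq> y ! i then real (card {u\<in>Cs. u ! i \<noteq> x ! i \<and> u ! i \<noteq> y ! i}) else 0))
          / real (card {y\<in>Cs. take l y = take l x}))
     \<le> (real n - real l) * (((real b)^2 - 3*real b + 2)/(real b)^2 * (real (card Cs))^2)"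
proof -
  define \<kappa> where "\<kappa> = ((real b)^2 - 3*real b + 2)/(real b)^2"
  define t where "t i x y = (if x ! i \<noteq> y ! i then real (card {u\<in>Cs. u ! i \<noteq> x ! i \<and> u ! i \<noteq> y ! i}) else 0)" for i x y
  define D where "D x = {y\<in>Cs. take l y = take l x}" for x
  have finD: "finite (D x)" for x unfolding D_def using finCs by simp
  have "(\<Sum>x\<in>Cs. (\<Sum>y\<in>D x. \<Sum>i<n. t i x y) / real (card (D x)))
      = (\<Sum>x\<in>Cs. \<Sum>i<n. (\<Sum>y\<in>D x. t i x y) / real (card (D x)))"
    by (simp add: sum.swap[of _ "D _"] sum_divide_distrib)
  also have "\<dots> = (\<Sum>i<n. \<Sum>x\<in>Cs. (\<Sum>y\<in>D x. t i x y) / real (card (D x)))"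
    by (rule sum.swap)
  also have "\<dots> \<le> (\<Sum>i<n. if i < l then 0 else \<kappa> * (real (card Cs))^2)"
  proof (intro sum_mono)
    fix i assume i: "i \<in> {..<n}"
    show "(\<Sum>x\<in>Cs. (\<Sum>y\<in>D x. t i x y) / real (card (D x))) \<le> (if i < l then 0 else \<kappa> * (real (card Cs))^2)"
    proof (cases "i < l")
      case True
      have "t i x y = 0" if "y \<in> D x" for x y
      proof -
        have "take l y ! i = take l x ! i" using that unfolding D_def by auto
        hence "y ! i = x ! i" using True by (simp add: nth_take)
        thus ?thesis unfolding t_def by simp
      qed
      thus ?thesis using True by simp
    next
      case False
      have colr: "x ! i \<in> {1..b}" if "x \<in> Cs" for x using words_nth[of x b n i] that CW i by auto
      show ?thesis using False coord_bound[where Cs=Cs and key="take l" and col="\<lambda>x. x ! i" and b=b, OF finCs colr b]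
        unfolding t_def D_def \<kappa>_def by (simp add: eq_commute)
    qed
  qed
  also have "\<dots> = (real n - real l) * (\<kappa> * (real (card Cs))^2)"
  proof -
    have "(\<Sum>i<n. if i < l then 0 else \<kappa> * (real (card Cs))^2) = (\<Sum>i\<in>{l..<n}. \<kappa> * (real (card Cs))^2)"
      by (rule sum.mono_neutral_cong_right) auto
    thus ?thesis using that by (simp add: of_nat_diff)
  qed
  finally show ?thesis unfolding t_def D_def \<kappa>_def .
qed



lemma finite_words: "finite (words b n)"
proof -
  have "words b n = {xs. set xs \<subseteq> {1..b} \<and> length xs = n}" unfolding words_def by auto
  thus ?thesis using finite_lists_length_eq[of "{1..b}" n] by simp
qed

lemma core:
  fixes b k n L l :: nat and C Cs :: "nat list set"
  assumes hc: "is_hash_code b k n C" and k: "4 \<le> k" and kb: "k \<le> b" and L: "2 \<le> L" and lnn: "l \<le> n"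
    and Cs_def: "Cs = {x\<in>C. L \<le> card {y\<in>C. take l y = take l x}}" and ne: "Cs \<noteq> {}"
  shows "ln (real (card Cs)) \<le> ln (real k - 1) + ln ((real b - 2) / (real k - 3))
           * (((real b)^2 - 3*real b + 2)/(real b)^2 * (real L / (real L - 1)) * (real n - real l))"
proof -
  define \<kappa> where "\<kappa> = ((real b)^2 - 3*real b + 2)/(real b)^2"
  have CW: "C \<subseteq> words b n" using hc unfolding is_hash_code_def by auto
  have finC: "finite C" by (rule finite_subset[OF CW finite_words])
  have CsC: "Cs \<subseteq> C" unfolding Cs_def by auto
  have finCs: "finite Cs" by (rule finite_subset[OF CsC finC])
  have CsW: "Cs \<subseteq> words b n" using CsC CW by auto
  have b4: "4 \<le> b" using k kb by simp
  have Dsame: "{y\<in>Cs. take l y = take l x} = {y\<in>C. take l y = take l x}" if x: "x \<in> Cs" for x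
  proof (intro equalityI subsetI)
    fix y assume y: "y \<in> {y\<in>C. take l y = take l x}"
    have "{z\<in>C. take l z = take l y} = {z\<in>C. take l z = take l x}" using y by auto
    thus "y \<in> {y\<in>Cs. take l y = take l x}" using x y unfolding Cs_def by auto
  qed (use CsC in auto)
  have dL: "L \<le> card {y\<in>Cs. take l y = take l x}" if x: "x \<in> Cs" for x
    using Dsame[OF x] x unfolding Cs_def by auto
  define m where "m = real (card Cs)"
  have mpos: "m > 0" unfolding m_def using finCs ne by (simp add: card_gt_0_iff)
  have kap: "\<kappa> \<ge> 0"
  proof -
    have "(real b)^2 - 3*real b + 2 = (real b - 1) * (real b - 2)" by (simp add: algebra_simps power2_eq_square)
    also have "\<dots> \<ge> 0" using b4 by simp
    finally show ?thesis unfolding \<kappa>_def by simp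
  qed
  define Fv where "Fv x y = (\<Sum>i<n. if x ! i \<noteq> y ! i then real (card {u\<in>Cs. u ! i \<noteq> x ! i \<and> u ! i \<noteq> y ! i}) else 0)" for x y
  define B where "B = real L / (real L - 1) * \<kappa> * m * (real n - real l)"
  have Lr: "real L \<ge> 2" using L by simp
  have B0: "B \<ge> 0" unfolding B_def using Lr kap mpos lnn by simp
  have avg: "(\<Sum>x\<in>Cs. (\<Sum>y\<in>{y\<in>Cs. take l y = take l x}. Fv x y) / real (card {y\<in>Cs. take l y = take l x}))
      \<le> (real n - real l) * (\<kappa> * m^2)"
    using avg_bound[OF CsW finCs b4 lnn] unfolding Fv_def \<kappa>_def m_def .
  obtain x y where xy: "x \<in> Cs" "y \<in> Cs" "x \<noteq> y" "Fv x y \<le> B"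
  proof (rule ccontr)
    note ob = that
    assume nt: "\<not> thesis"
    have big: "Fv x y > B" if "x \<in> Cs" "y \<in> Cs" "take l y = take l x" "x \<noteq> y" for x y
      using ob[of x y] nt that by force
    define D where "D x = {y\<in>Cs. take l y = take l x}" for x
    have each: "(\<Sum>y\<in>D x. Fv x y) / real (card (D x)) > (real L - 1) / real L * B" if x: "x \<in> Cs" for x
    proof -
      have finD: "finite (D x)" unfolding D_def using finCs by simp
      have xD: "x \<in> D x" unfolding D_def using x by simp
      have dLx: "real L \<le> real (card (D x))" using dL[OF x] unfolding D_def by simp
      have Fxx: "Fv x x = 0" unfolding Fv_def by simp
      have ne2: "D x - {x} \<noteq> {}"
      proof
        assume "D x - {x} = {}"
        hence "D x \<subseteq> {x}" by auto
        hence "card (D x) \<le> 1" using card_mono[of "{x}" "D x"] by simp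
        thus False using dL[OF x] L unfolding D_def by simp
      qed
      have eq: "(\<Sum>y\<in>D x. Fv x y) = Fv x x + (\<Sum>y\<in>D x - {x}. Fv x y)"
        using sum.remove[OF finD xD] by simp
      have gt: "(\<Sum>y\<in>D x - {x}. Fv x y) > (\<Sum>y\<in>D x - {x}. B)"
        using finD ne2 big x unfolding D_def by (intro sum_strict_mono) auto
      have cB: "(\<Sum>y\<in>D x - {x}. B) = (real (card (D x)) - 1) * B"
      proof -
        have "card (D x) \<ge> 1" using finD xD by (metis One_nat_def Suc_leI card_gt_0_iff empty_iff)
        thus ?thesis using finD xD by (simp add: card_Diff_singleton of_nat_diff)
      qed
      have s1: "(\<Sum>y\<in>D x. Fv x y) > (real (card (D x)) - 1) * B"
        using eq gt cB Fxx by linarith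
      have dpos: "real (card (D x)) > 0" using dLx Lr by simp
      have "(real L - 1) / real L * B \<le> (real (card (D x)) - 1) / real (card (D x)) * B"
      proof (intro mult_right_mono B0)
        show "(real L - 1) / real L \<le> (real (card (D x)) - 1) / real (card (D x))"
          using dLx Lr dpos by (simp add: field_simps)
      qed
      also have "\<dots> = (real (card (D x)) - 1) * B / real (card (D x))" by simp
      also have "\<dots> < (\<Sum>y\<in>D x. Fv x y) / real (card (D x))"
        using s1 dpos by (intro divide_strict_right_mono) auto
      finally show ?thesis .
    qed
    have "(\<Sum>x\<in>Cs. (real L - 1) / real L * B) < (\<Sum>x\<in>Cs. (\<Sum>y\<in>D x. Fv x y) / real (card (D x)))"
      using finCs ne each by (intro sum_strict_mono) auto
    moreover have "(\<Sum>x\<in>Cs. (real L - 1) / real L * B) = (real n - real l) * (\<kappa> * m^2)"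
      unfolding B_def using Lr by (simp add: m_def[symmetric] power2_eq_square field_simps)
    ultimately show False using avg unfolding D_def by simp
  qed
  define I where "I = {i. i < n \<and> x ! i \<noteq> y ! i}"
  define Col where "Col i = {1..b} - {x ! i, y ! i}" for i
  have xW: "x \<in> words b n" "y \<in> words b n" using xy CsW by auto
  have finI: "finite I" unfolding I_def by simp
  have ColI: "finite (Col i) \<and> card (Col i) = b - 2" if i: "i \<in> I" for i
  proof -
    have "x ! i \<in> {1..b}" "y ! i \<in> {1..b}" using words_nth xW i unfolding I_def by auto
    moreover have "x ! i \<noteq> y ! i" using i unfolding I_def by auto
    ultimately have "card ({1..b} - {x ! i, y ! i}) = b - 2" by (simp add: card_Diff_subset)
    thus ?thesis unfolding Col_def by simp
  qed
  have t: "1 \<le> k - 3" "k - 3 \<le> b - 2" using k kb by auto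
  have sep: "\<exists>i\<in>I. (\<forall>u\<in>T. u ! i \<in> Col i) \<and> inj_on (\<lambda>u. u ! i) T"
    if "T \<subseteq> Cs - {x, y}" "card T = (k - 3) + 1" for T
    using hash_sep[OF hc k CsC xy(1) xy(2) xy(3) that] unfolding I_def Col_def by blast
  have hc1: "(\<Sum>u\<in>Cs. (real (k - 3) / real (b - 2)) ^ card {i\<in>I. u ! i \<in> Col i}) \<le> real (k - 3) + real (card {x, y})"
  proof -
    have finZ: "finite {x, y}" by simp
    show ?thesis using hansel_count[OF finCs finZ finI ColI t sep] by simp
  qed
  have cxy: "real (card {x, y}) = 2" using xy(3) by simp
  have rpos: "real (k - 3) / real (b - 2) > 0" using t by simp
  have jl: "ln m \<le> ln (real (k - 3) + 2) - (\<Sum>u\<in>Cs. real (card {i\<in>I. u ! i \<in> Col i})) / m * ln (real (k - 3) / real (b - 2))"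
    using jensen_log[OF finCs ne rpos, of "\<lambda>u. card {i\<in>I. u ! i \<in> Col i}"] hc1 cxy unfolding m_def by simp
  have Esum: "(\<Sum>u\<in>Cs. real (card {i\<in>I. u ! i \<in> Col i})) = Fv x y"
  proof -
    have "real (card {i\<in>I. u ! i \<in> Col i}) = (\<Sum>i<n. if x ! i \<noteq> y ! i \<and> u ! i \<noteq> x ! i \<and> u ! i \<noteq> y ! i then 1 else 0)"
      if u: "u \<in> Cs" for u
    proof -
      have "{i\<in>I. u ! i \<in> Col i} = {i\<in>{..<n}. x ! i \<noteq> y ! i \<and> u ! i \<noteq> x ! i \<and> u ! i \<noteq> y ! i}"
        using words_nth[of u b n] u CsW unfolding I_def Col_def by auto
      hence "card {i\<in>I. u ! i \<in> Col i} = (\<Sum>i\<in>{i\<in>{..<n}. x ! i \<noteq> y ! i \<and> u ! i \<noteq> x ! i \<and> u ! i \<noteq> y ! i}. 1)"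
        by simp
      also have "\<dots> = (\<Sum>i<n. if x ! i \<noteq> y ! i \<and> u ! i \<noteq> x ! i \<and> u ! i \<noteq> y ! i then 1 else 0)"
        by (rule sum.inter_filter) simp
      finally show ?thesis by (simp add: of_nat_sum if_distrib cong: if_cong)
    qed
    hence "(\<Sum>u\<in>Cs. real (card {i\<in>I. u ! i \<in> Col i})) = (\<Sum>u\<in>Cs. \<Sum>i<n. if x ! i \<noteq> y ! i \<and> u ! i \<noteq> x ! i \<and> u ! i \<noteq> y ! i then 1 else 0)"
      by simp
    also have "\<dots> = (\<Sum>i<n. \<Sum>u\<in>Cs. if x ! i \<noteq> y ! i \<and> u ! i \<noteq> x ! i \<and> u ! i \<noteq> y ! i then 1 else 0)"
      by (rule sum.swap)
    also have "\<dots> = Fv x y" unfolding Fv_def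
    proof (intro sum.cong refl)
      fix i
      show "(\<Sum>u\<in>Cs. if x ! i \<noteq> y ! i \<and> u ! i \<noteq> x ! i \<and> u ! i \<noteq> y ! i then 1 else (0::real))
          = (if x ! i \<noteq> y ! i then real (card {u\<in>Cs. u ! i \<noteq> x ! i \<and> u ! i \<noteq> y ! i}) else 0)"
      proof (cases "x ! i \<noteq> y ! i")
        case True
        thus ?thesis using sum.inter_filter[OF finCs, of "\<lambda>_. 1::real" "\<lambda>u. u ! i \<noteq> x ! i \<and> u ! i \<noteq> y ! i"] by simp
      qed simp
    qed
    finally show ?thesis .
  qed
  have lnr: "- ln (real (k - 3) / real (b - 2)) = ln ((real b - 2) / (real k - 3))"
    using t k kb by (simp add: ln_div of_nat_diff)
  have lnr0: "ln ((real b - 2) / (real k - 3)) \<ge> 0" using k kb by simp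
  have "ln m \<le> ln (real k - 1) + Fv x y / m * ln ((real b - 2) / (real k - 3))"
  proof -
    have e2: "real (k - 3) + 2 = real k - 1" using k by (simp add: of_nat_diff)
    have A: "ln m \<le> ln (real k - 1) - Fv x y / m * ln (real (k - 3) / real (b - 2))"
      using jl unfolding Esum e2 .
    have "Fv x y / m * ln ((real b - 2) / (real k - 3)) = - (Fv x y / m * ln (real (k - 3) / real (b - 2)))"
      unfolding lnr[symmetric] by simp
    thus ?thesis using A by linarith
  qed
  also have "\<dots> \<le> ln (real k - 1) + B / m * ln ((real b - 2) / (real k - 3))"
    using xy(4) mpos lnr0 by (intro add_left_mono mult_right_mono divide_right_mono) auto
  also have "B / m = \<kappa> * (real L / (real L - 1)) * (real n - real l)"
    unfolding B_def using mpos by simp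
  finally show ?thesis unfolding m_def \<kappa>_def by (simp add: mult.commute)
qed



lemma card_words: "card (words b n) = b ^ n"
proof -
  have "words b n = {xs. set xs \<subseteq> {1..b} \<and> length xs = n}" unfolding words_def by auto
  thus ?thesis using card_lists_length_eq[of "{1..b}" n] by simp
qed

lemma opt_code: assumes k0: "k > 0" obtains C where "is_hash_code b k n C" "card C = N_hash b k n"
proof -
  define S where "S = {C. is_hash_code b k n C}"
  have "S \<subseteq> Pow (words b n)" unfolding S_def is_hash_code_def by auto
  hence finS: "finite S" using finite_words by (meson finite_Pow_iff finite_subset)
  have "{} \<in> S" unfolding S_def is_hash_code_def using k0 by auto
  hence "Max (card ` S) \<in> card ` S" using finS by (intro Max_in) auto
  then obtain C where "C \<in> S" "card C = Max (card ` S)" by auto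
  thus ?thesis using that unfolding S_def N_hash_def by auto
qed

lemma small_classes:
  fixes C :: "nat list set" and l L :: nat
  assumes CW: "C \<subseteq> words b n" and lnn: "l \<le> n"
  shows "card {x\<in>C. \<not> L \<le> card {y\<in>C. take l y = take l x}} \<le> (L - 1) * b ^ l"
proof -
  define Sm where "Sm = {x\<in>C. \<not> L \<le> card {y\<in>C. take l y = take l x}}"
  define P where "P = take l ` Sm"
  have finC: "finite C" by (rule finite_subset[OF CW finite_words])
  have PW: "P \<subseteq> words b l"
  proof
    fix p assume "p \<in> P"
    then obtain x where x: "x \<in> Sm" "p = take l x" unfolding P_def by auto
    have "x \<in> words b n" using x CW unfolding Sm_def by auto
    hence "length x = n" "set x \<subseteq> {1..b}" unfolding words_def by auto
    moreover have "set (take l x) \<subseteq> set x" by (rule set_take_subset)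
    ultimately show "p \<in> words b l" using x lnn unfolding words_def by auto
  qed
  have finP: "finite P" using PW finite_words finite_subset by blast
  have "Sm \<subseteq> (\<Union>p\<in>P. {x\<in>C. take l x = p} \<inter> Sm)" unfolding P_def Sm_def by auto
  hence "card Sm \<le> card (\<Union>p\<in>P. {x\<in>C. take l x = p} \<inter> Sm)"
    using finC finP by (intro card_mono) auto
  also have "\<dots> \<le> (\<Sum>p\<in>P. card ({x\<in>C. take l x = p} \<inter> Sm))" by (rule card_UN_le[OF finP])
  also have "\<dots> \<le> (\<Sum>p\<in>P. L - 1)"
  proof (intro sum_mono)
    fix p assume "p \<in> P"
    then obtain x where x: "x \<in> Sm" "p = take l x" unfolding P_def by auto
    have "card ({x\<in>C. take l x = p} \<inter> Sm) \<le> card {y\<in>C. take l y = take l x}"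
      using finC x by (intro card_mono) auto
    also have "\<dots> \<le> L - 1" using x unfolding Sm_def by auto
    finally show "card ({x\<in>C. take l x = p} \<inter> Sm) \<le> L - 1" .
  qed
  also have "\<dots> = card P * (L - 1)" by simp
  also have "\<dots> \<le> b ^ l * (L - 1)"
    using card_mono[OF finite_words PW] card_words[of b l] by simp
  finally show ?thesis unfolding Sm_def by (simp add: mult.commute)
qed

lemma per_n:
  fixes b k L n :: nat
  assumes k: "4 \<le> k" and kb: "k \<le> b" and L: "2 \<le> L"
  defines "A \<equiv> ln ((real b - 2) / (real k - 3)) * (((real b)^2 - 3*real b + 2)/(real b)^2) * (real L / (real L - 1))"
  defines "K1 \<equiv> ln (2 * real L) + ln (real k - 1) + A * ln (2 * real L) / ln (real b) + A"
  shows "ln (real (N_hash b k n)) * (1 + A / ln (real b)) \<le> A * real n + K1"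
proof -
  obtain C where hc: "is_hash_code b k n C" and cC: "card C = N_hash b k n"
    using opt_code[of k b n] k by auto
  define M where "M = card C"
  have CW: "C \<subseteq> words b n" using hc unfolding is_hash_code_def by auto
  have finC: "finite C" by (rule finite_subset[OF CW finite_words])
  have Mle: "M \<le> b ^ n" unfolding M_def using card_mono[OF finite_words CW] card_words[of b n] by simp
  have b4: "4 \<le> b" using k kb by simp
  have lb: "ln (real b) > 0" using b4 by simp
  have c0: "ln ((real b - 2) / (real k - 3)) \<ge> 0" using k kb by simp
  have kap: "((real b)^2 - 3*real b + 2)/(real b)^2 \<ge> 0"
  proof -
    have "(real b)^2 - 3*real b + 2 = (real b - 1) * (real b - 2)" by (simp add: algebra_simps power2_eq_square)
    also have "\<dots> \<ge> 0" using b4 by simp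
    finally show ?thesis by simp
  qed
  have "real L / (real L - 1) \<ge> 0" using L by simp
  hence A0: "A \<ge> 0" unfolding A_def by (rule mult_nonneg_nonneg[OF mult_nonneg_nonneg[OF c0 kap]])
  have lk: "ln (real k - 1) \<ge> 0" using k by simp
  have l2L: "ln (2 * real L) \<ge> 0" using L by simp
  have AlM: "A * ln (2 * real L) / ln (real b) \<ge> 0" using A0 l2L lb by simp
  show ?thesis
  proof (cases "M < 2 * L")
    case True
    have "ln (real M) \<le> ln (2 * real L)"
    proof (cases "M = 0")
      case False thus ?thesis using True by simp
    qed (use l2L in simp)
    hence "ln (real M) * (1 + A / ln (real b)) \<le> ln (2 * real L) * (1 + A / ln (real b))"
      using A0 lb by (intro mult_right_mono) auto
    also have "\<dots> = ln (2 * real L) + A * ln (2 * real L) / ln (real b)" by (simp add: algebra_simps)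
    also have "\<dots> \<le> A * real n + K1" unfolding K1_def using A0 lk by simp
    finally show ?thesis unfolding M_def cC .
  next
    case False
    hence "(2 * L) div (2 * L) \<le> M div (2 * L)" by (intro div_le_mono) simp
    hence "M div (2 * L) \<ge> 1" using L by simp
    then obtain l where l: "b ^ l \<le> M div (2 * L)" "M div (2 * L) < b ^ (l + 1)"
      using ex_power_ivl1[of b "M div (2 * L)"] b4 by auto
    have l1: "2 * L * b ^ l \<le> M"
    proof -
      have "2 * L * b ^ l \<le> 2 * L * (M div (2 * L))" by (rule mult_le_mono2[OF l(1)])
      also have "\<dots> \<le> M" by (rule times_div_less_eq_dividend)
      finally show ?thesis .
    qed
    have l2: "M < 2 * L * b ^ (l + 1)"
    proof -
      have "0 < 2 * L" using L by simp
      from l(2) div_less_iff_less_mult[OF this] show ?thesis by (simp add: mult.commute)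
    qed
    have lnn: "l \<le> n"
    proof -
      have "b ^ l \<le> 2 * L * b ^ l" using L by simp
      hence "b ^ l \<le> b ^ n" using l1 Mle by linarith
      thus ?thesis using b4 by (simp add: power_le_imp_le_exp)
    qed
    define Cs where "Cs = {x\<in>C. L \<le> card {y\<in>C. take l y = take l x}}"
    have sm: "card {x\<in>C. \<not> L \<le> card {y\<in>C. take l y = take l x}} \<le> (L - 1) * b ^ l"
      by (rule small_classes[OF CW lnn])
    have "M = card Cs + card {x\<in>C. \<not> L \<le> card {y\<in>C. take l y = take l x}}"
    proof -
      have "C = Cs \<union> {x\<in>C. \<not> L \<le> card {y\<in>C. take l y = take l x}}" unfolding Cs_def by auto
      moreover have "card (Cs \<union> {x\<in>C. \<not> L \<le> card {y\<in>C. take l y = take l x}}) = card Cs + card {x\<in>C. \<not> L \<le> card {y\<in>C. take l y = take l x}}"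
        using finC unfolding Cs_def by (intro card_Un_disjoint) auto
      ultimately show ?thesis unfolding M_def by simp
    qed
    hence MCs: "M \<le> 2 * card Cs" using sm l1 by (simp add: algebra_simps diff_mult_distrib)
    have ne: "Cs \<noteq> {}" using MCs False L by auto
    have core1: "ln (real (card Cs)) \<le> ln (real k - 1) + A * (real n - real l)"
      using core[OF hc k kb L lnn Cs_def ne] unfolding A_def by (simp add: algebra_simps)
    have Mpos: "real M > 0" using False L by simp
    have lnM1: "ln (real M) \<le> ln 2 + ln (real (card Cs))"
    proof -
      have "real M \<le> 2 * real (card Cs)" using MCs by linarith
      hence "ln (real M) \<le> ln (2 * real (card Cs))" using Mpos by simp
      also have "\<dots> = ln 2 + ln (real (card Cs))" using ne finC Cs_def
      proof -
        have "finite Cs" using finC unfolding Cs_def by simp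
        hence "real (card Cs) > 0" using ne by (simp add: card_gt_0_iff)
        thus ?thesis by (simp add: ln_mult)
      qed
      finally show ?thesis .
    qed
    have lnM2: "ln (real M) < ln (2 * real L) + (real l + 1) * ln (real b)"
    proof -
      have "real M < 2 * real L * real b ^ (l + 1)" 
      proof -
        have "real M < real (2 * L * b ^ (l + 1))" using l2 by (simp only: of_nat_less_iff)
        thus ?thesis by simp
      qed
      hence "ln (real M) < ln (2 * real L * real b ^ (l + 1))" using Mpos by simp
      also have "\<dots> = ln (2 * real L) + (real l + 1) * ln (real b)"
        using L b4 by (simp add: ln_mult ln_realpow algebra_simps)
      finally show ?thesis .
    qed
    have "A * (real l * ln (real b)) \<ge> A * (ln (real M) - ln (2 * real L) - ln (real b))"
      using lnM2 A0 by (intro mult_left_mono) (auto simp: algebra_simps)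
    hence Al: "A * real l \<ge> A * ln (real M) / ln (real b) - A * ln (2 * real L) / ln (real b) - A"
      using lb by (simp add: field_simps)
    have "ln (real M) \<le> ln 2 + ln (real k - 1) + A * real n - A * real l"
      using lnM1 core1 by (simp add: algebra_simps)
    hence "ln (real M) + A * ln (real M) / ln (real b) \<le> A * real n + K1"
    proof -
      have "ln 2 \<le> ln (2 * real L)" using L by simp
      thus ?thesis using Al \<open>ln (real M) \<le> ln 2 + ln (real k - 1) + A * real n - A * real l\<close> unfolding K1_def by linarith
    qed
    thus ?thesis unfolding M_def cC by (simp add: algebra_simps)
  qed
qed



lemma bound_L:
  fixes b k L :: nat
  assumes k: "4 \<le> k" and kb: "k \<le> b" and L: "2 \<le> L"
  shows "R_hash b k \<le> ereal (1 / (ln 2 * (1 / ln (real b) + (real L - 1) / (real L *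
           ((((real b)^2 - 3*real b + 2)/(real b)^2) * ln ((real b - 2) / (real k - 3)))))))"
proof -
  define c where "c = ln ((real b - 2) / (real k - 3))"
  define \<kappa> where "\<kappa> = ((real b)^2 - 3*real b + 2)/(real b)^2"
  define A where "A = c * \<kappa> * (real L / (real L - 1))"
  define K1 where "K1 = ln (2 * real L) + ln (real k - 1) + A * ln (2 * real L) / ln (real b) + A"
  define \<rho> where "\<rho> = 1 / (ln 2 * (1 / ln (real b) + (real L - 1) / (real L * (\<kappa> * c))))"
  define D where "D = (1 + A / ln (real b)) * ln 2"
  have b4: "4 \<le> b" using k kb by simp
  have lb: "ln (real b) > 0" using b4 by simp
  have cpos: "c > 0" unfolding c_def using k kb by simp
  have kpos: "\<kappa> > 0"
  proof -
    have "(real b)^2 - 3*real b + 2 = (real b - 1) * (real b - 2)" by (simp add: algebra_simps power2_eq_square)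
    also have "\<dots> > 0" using b4 by simp
    finally show ?thesis unfolding \<kappa>_def using b4 by simp
  qed
  have Lr: "real L \<ge> 2" using L by simp
  have Apos: "A > 0" unfolding A_def using cpos kpos Lr by simp
  have Dpos: "D > 0" unfolding D_def using Apos lb by (intro mult_pos_pos add_pos_pos divide_pos_pos) auto
  have rhoeq: "A / D = \<rho>"
  proof -
    have "1 / A = (real L - 1) / (real L * (\<kappa> * c))" unfolding A_def using Lr cpos kpos by (simp add: field_simps)
    hence "\<rho> = 1 / (ln 2 * (1 / ln (real b) + 1 / A))" unfolding \<rho>_def by simp
    also have "\<dots> = A / D" unfolding D_def using Apos lb by (simp add: field_simps)
    finally show ?thesis by simp
  qed
  have pn: "ln (real (N_hash b k n)) * (1 + A / ln (real b)) \<le> A * real n + K1" for n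
    using per_n[OF k kb L, of n] unfolding A_def K1_def c_def \<kappa>_def by simp
  have ev: "eventually (\<lambda>n. ereal (log 2 (real (N_hash b k n)) / real n) \<le> ereal (\<rho> + (K1 / D) / real n)) sequentially"
    using eventually_ge_at_top[of "1::nat"]
  proof (rule eventually_mono)
    fix n :: nat assume n: "1 \<le> n"
    have np: "real n > 0" using n by simp
    have "log 2 (real (N_hash b k n)) / real n = ln (real (N_hash b k n)) * (1 + A / ln (real b)) / (D * real n)"
    proof -
      have P: "1 + A / ln (real b) > 0" using Apos lb by (intro add_pos_pos divide_pos_pos) auto
      have g: "\<And>X P q :: real. P > 0 \<Longrightarrow> X / q = X * P / (P * q)" by simp
      have "log 2 (real (N_hash b k n)) / real n = ln (real (N_hash b k n)) / (ln 2 * real n)"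
        by (simp add: log_def)
      also have "\<dots> = ln (real (N_hash b k n)) * (1 + A / ln (real b)) / ((1 + A / ln (real b)) * (ln 2 * real n))"
        by (rule g[OF P])
      finally show ?thesis unfolding D_def by (simp add: mult.assoc)
    qed
    also have "\<dots> \<le> (A * real n + K1) / (D * real n)"
      using pn[of n] Dpos np by (intro divide_right_mono) auto
    also have "\<dots> = A / D + (K1 / D) / real n" using Dpos np by (simp add: field_simps)
    finally show "ereal (log 2 (real (N_hash b k n)) / real n) \<le> ereal (\<rho> + (K1 / D) / real n)"
      using rhoeq by simp
  qed
  have lim: "(\<lambda>n. ereal (\<rho> + (K1 / D) / real n)) \<longlonglongrightarrow> ereal \<rho>"
  proof -
    have "(\<lambda>n. \<rho> + (K1 / D) / real n) \<longlonglongrightarrow> \<rho> + 0"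
      by (intro tendsto_add tendsto_const lim_const_over_n)
    thus ?thesis by (intro tendsto_ereal) simp
  qed
  have "R_hash b k \<le> limsup (\<lambda>n. ereal (\<rho> + (K1 / D) / real n))"
    unfolding R_hash_def by (rule Limsup_mono[OF ev])
  also have "\<dots> = ereal \<rho>" by (rule lim_imp_Limsup[OF _ lim]) simp
  finally show ?thesis unfolding \<rho>_def c_def \<kappa>_def .
qed

theorem mainTheorem1:
  fixes b k :: nat
  assumes "4 \<le> k" and "k \<le> b"
  shows "R_hash b k \<le> ereal (inverse (1 / log 2 (real b)
           + (real b)^2 / (((real b)^2 - 3 * real b + 2) * log 2 ((real b - 2) / (real k - 3)))))"
proof -
  note k = assms(1) and kb = assms(2)
  define c where "c = ln ((real b - 2) / (real k - 3))"
  define \<kappa> where "\<kappa> = ((real b)^2 - 3*real b + 2)/(real b)^2"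
  define K where "K = \<kappa> * c"
  define g where "g L = 1 / (ln 2 * (1 / ln (real b) + (real L - 1) / (real L * K)))" for L :: nat
  have b4: "4 \<le> b" using k kb by simp
  have lb: "ln (real b) > 0" using b4 by simp
  have cpos: "c > 0" unfolding c_def using k kb by simp
  have num: "(real b)^2 - 3*real b + 2 > 0"
  proof -
    have "(real b)^2 - 3*real b + 2 = (real b - 1) * (real b - 2)" by (simp add: algebra_simps power2_eq_square)
    also have "\<dots> > 0" using b4 by simp
    finally show ?thesis .
  qed
  have kpos: "\<kappa> > 0" unfolding \<kappa>_def using num b4 by simp
  have Kpos: "K > 0" unfolding K_def using kpos cpos by simp
  have bnd: "eventually (\<lambda>L. R_hash b k \<le> ereal (g L)) sequentially"
    using eventually_ge_at_top[of "2::nat"]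
  proof (rule eventually_mono)
    fix L :: nat assume "2 \<le> L"
    from bound_L[OF k kb this] show "R_hash b k \<le> ereal (g L)"
      unfolding g_def K_def \<kappa>_def c_def by simp
  qed
  have l1: "(\<lambda>L. (real L - 1) / (real L * K)) \<longlonglongrightarrow> 1 / K"
  proof -
    have "(\<lambda>L. 1 / K - (1 / K) / real L) \<longlonglongrightarrow> 1 / K - 0"
      by (intro tendsto_diff tendsto_const lim_const_over_n)
    moreover have "eventually (\<lambda>L. 1 / K - (1 / K) / real L = (real L - 1) / (real L * K)) sequentially"
      using eventually_ge_at_top[of "1::nat"]
      by (rule eventually_mono) (use Kpos in \<open>simp add: field_simps\<close>)
    ultimately show ?thesis by (simp add: tendsto_cong)
  qed
  have "1 / ln (real b) + 1 / K > 0" using lb Kpos by (intro add_pos_pos) auto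
  hence den: "ln 2 * (1 / ln (real b) + 1 / K) \<noteq> 0" by simp
  have "g \<longlonglongrightarrow> 1 / (ln 2 * (1 / ln (real b) + 1 / K))"
    unfolding g_def by (intro tendsto_divide tendsto_const tendsto_mult tendsto_add l1 den)
  hence lim: "(\<lambda>L. ereal (g L)) \<longlonglongrightarrow> ereal (1 / (ln 2 * (1 / ln (real b) + 1 / K)))"
    by (rule tendsto_ereal)
  have "R_hash b k \<le> ereal (1 / (ln 2 * (1 / ln (real b) + 1 / K)))"
    by (rule tendsto_lowerbound[OF lim bnd]) simp
  also have "1 / (ln 2 * (1 / ln (real b) + 1 / K)) = inverse (1 / log 2 (real b)
           + (real b)^2 / (((real b)^2 - 3 * real b + 2) * log 2 ((real b - 2) / (real k - 3))))"
  proof -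
    have "1 / log 2 (real b) + (real b)^2 / (((real b)^2 - 3 * real b + 2) * log 2 ((real b - 2) / (real k - 3)))
        = ln 2 * (1 / ln (real b) + 1 / K)"
      unfolding log_def K_def \<kappa>_def c_def[symmetric] using num b4 cpos lb by (simp add: field_simps)
    thus ?thesis by (simp add: inverse_eq_divide)
  qed
  finally show ?thesis .
qed

end
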